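(* For every $n\ge 3$, $$\sum_{T\in\mathcal{BT}_n}S(T)=n\sum_{k=1}^{n-1}\frac{(2n-k-3)!\,k^2}{(n-k-1)!\,2^{n-k-1}}.$$
   Context: $\mathcal{BT}_n$ is the set of (isomorphism classes of) binary phylogenetic trees with leaves bijectively labeled by $\{1,\dots,n\}$ (rooted trees, every internal node with exactly two children). The depth $\delta_T(v)$ is the number of arcs from the root to $v$, and the Sackin index is $S(T)=\sum_{i=1}^n\delta_T(i)$. *)

theory Defs
  imports Complex_Main
begin

text \<open>Rooted binary trees with natural-number leaf labels (children ordered;
  unordered trees are obtained below by quotienting with isomorphism).\<close>
datatype ltree = Leaf nat | Node ltree ltree

fun leaves :: "ltree \<Rightarrow> nat list" where
  "leaves (Leaf i) = [i]"
| "leaves (Node l r) = leaves l @ leaves r"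

inductive iso :: "ltree \<Rightarrow> ltree \<Rightarrow> bool" where
  iso_leaf: "iso (Leaf i) (Leaf i)"
| iso_node: "iso l l' \<Longrightarrow> iso r r' \<Longrightarrow> iso (Node l r) (Node l' r')"
| iso_swap: "iso l l' \<Longrightarrow> iso r r' \<Longrightarrow> iso (Node l r) (Node r' l')"

fun depth :: "ltree \<Rightarrow> nat \<Rightarrow> nat" where
  "depth (Leaf j) i = 0"
| "depth (Node l r) i = 1 + (if i \<in> set (leaves l) then depth l i else depth r i)"

definition labelled_trees :: "nat \<Rightarrow> ltree set" where
  "labelled_trees n = {t. distinct (leaves t) \<and> set (leaves t) = {1..n}}"

definition BT :: "nat \<Rightarrow> ltree set set" where
  "BT n = labelled_trees n // {(s, t). iso s t}"

definition sackin :: "nat \<Rightarrow> ltree \<Rightarrow> nat" where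
  "sackin n t = (\<Sum>i = 1..n. depth t i)"

definition sackin_class :: "nat \<Rightarrow> ltree set \<Rightarrow> nat" where
  "sackin_class n C = sackin n (SOME t. t \<in> C)"

end

theory Submission
  imports Defs
begin


lemma leaves_ne: "leaves t \<noteq> []"
  by (induction t) auto

lemma iso_refl: "iso t t"
  by (induction t) (auto intro: iso.intros)

lemma iso_sym: "iso s t \<Longrightarrow> iso t s"
  by (induction rule: iso.induct) (auto intro: iso.intros)

lemma iso_trans: "iso s t \<Longrightarrow> iso t u \<Longrightarrow> iso s u"
proof (induction s t arbitrary: u rule: iso.induct)
  case (iso_leaf i) then show ?case by simp
next
  case (iso_node l l' r r')
  from iso_node.prems show ?case
    by (cases rule: iso.cases) (auto intro: iso.intros iso_node.IH)
next
  case (iso_swap l l' r r')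
  from iso_swap.prems show ?case
    by (cases rule: iso.cases) (auto intro: iso.intros iso_swap.IH)
qed

lemma iso_set: "iso s t \<Longrightarrow> set (leaves s) = set (leaves t)"
  by (induction rule: iso.induct) auto

lemma iso_length: "iso s t \<Longrightarrow> length (leaves s) = length (leaves t)"
  by (induction rule: iso.induct) auto

lemma iso_distinct: "iso s t \<Longrightarrow> distinct (leaves s) \<Longrightarrow> distinct (leaves t)"
proof (induction rule: iso.induct)
  case (iso_node l l' r r') then show ?case using iso_set[OF iso_node.hyps(1)] iso_set[OF iso_node.hyps(2)] by auto
next
  case (iso_swap l l' r r') then show ?case using iso_set[OF iso_swap.hyps(1)] iso_set[OF iso_swap.hyps(2)] by auto
qed auto

fun pl :: "ltree \<Rightarrow> nat" where
  "pl (Leaf j) = 0"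
| "pl (Node l r) = pl l + pl r + length (leaves l) + length (leaves r)"

lemma sum_Suc_card: "(\<Sum>i\<in>S. Suc (f i)) = sum f S + card S"
  by (induction S rule: infinite_finite_induct) auto

lemma iso_pl: "iso s t \<Longrightarrow> pl s = pl t"
  by (induction rule: iso.induct) (auto simp: iso_length)

lemma depth_sum: "distinct (leaves t) \<Longrightarrow> (\<Sum>i\<in>set (leaves t). depth t i) = pl t"
proof (induction t)
  case (Leaf x) then show ?case by simp
next
  case (Node l r)
  have d: "set (leaves l) \<inter> set (leaves r) = {}" "distinct (leaves l)" "distinct (leaves r)"
    using Node.prems by auto
  have "(\<Sum>i\<in>set (leaves (Node l r)). depth (Node l r) i)
     = (\<Sum>i\<in>set (leaves l). depth (Node l r) i) + (\<Sum>i\<in>set (leaves r). depth (Node l r) i)"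
    using d by (simp add: sum.union_disjoint)
  also have "(\<Sum>i\<in>set (leaves l). depth (Node l r) i) = (\<Sum>i\<in>set (leaves l). 1 + depth l i)"
    by (rule sum.cong) auto
  also have "(\<Sum>i\<in>set (leaves r). depth (Node l r) i) = (\<Sum>i\<in>set (leaves r). 1 + depth r i)"
    using d by (intro sum.cong) auto
  finally show ?case using d Node.IH by (simp add: sum_Suc_card distinct_card)
qed

lemma sackin_pl: "t \<in> labelled_trees n \<Longrightarrow> sackin n t = pl t"
  unfolding labelled_trees_def sackin_def using depth_sum by force

lemma iso_Leaf: "iso (Leaf i) u \<longleftrightarrow> u = Leaf i"
  by (auto elim: iso.cases intro: iso.intros)

lemma iso_Node: "iso (Node l r) u \<longleftrightarrow>
   (\<exists>a b. u = Node a b \<and> iso l a \<and> iso r b) \<or> (\<exists>a b. u = Node b a \<and> iso l a \<and> iso r b)"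
  by (auto elim: iso.cases intro: iso.intros)

lemma card_iso_class: "distinct (leaves t) \<Longrightarrow>
   finite {u. iso t u} \<and> card {u. iso t u} = 2 ^ (length (leaves t) - 1)"
proof (induction t)
  case (Leaf x) then show ?case by (simp add: iso_Leaf)
next
  case (Node l r)
  define A where "A = {u. iso l u}"
  define B where "B = {u. iso r u}"
  have d: "set (leaves l) \<inter> set (leaves r) = {}" "distinct (leaves l)" "distinct (leaves r)"
    using Node.prems by auto
  have fA: "finite A" "card A = 2 ^ (length (leaves l) - 1)" using Node.IH(1) d A_def by auto
  have fB: "finite B" "card B = 2 ^ (length (leaves r) - 1)" using Node.IH(2) d B_def by auto
  have eq: "{u. iso (Node l r) u} = (\<lambda>(a,b). Node a b) ` (A \<times> B) \<union> (\<lambda>(a,b). Node b a) ` (A \<times> B)"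
    unfolding A_def B_def iso_Node by auto
  have disj: "(\<lambda>(a,b). Node a b) ` (A \<times> B) \<inter> (\<lambda>(a,b). Node b a) ` (A \<times> B) = {}"
  proof (rule ccontr)
    assume "\<not> ?thesis"
    then obtain a b a' b' where "a \<in> A" "b \<in> B" "a' \<in> A" "b' \<in> B" "Node a b = Node b' a'" by auto
    then have "iso l a" "iso r a" by (auto simp: A_def B_def)
    then have "set (leaves l) = set (leaves r)" using iso_set by metis
    then show False using d leaves_ne by (metis Int_absorb set_empty)
  qed
  have i1: "inj_on (\<lambda>(a,b). Node a b) (A \<times> B)" by (auto simp: inj_on_def)
  have i2: "inj_on (\<lambda>(a,b). Node b a) (A \<times> B)" by (auto simp: inj_on_def)
  have la: "length (leaves l) \<ge> 1" "length (leaves r) \<ge> 1" using leaves_ne by (auto simp: Suc_le_eq)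
  have "card {u. iso (Node l r) u} = card (A \<times> B) + card (A \<times> B)"
    unfolding eq using disj fA fB i1 i2 by (simp add: card_Un_disjoint card_image)
  also have "\<dots> = 2 ^ (length (leaves (Node l r)) - 1)"
  proof -
    obtain a where a: "length (leaves l) = Suc a" using la by (cases "length (leaves l)") auto
    obtain b where b: "length (leaves r) = Suc b" using la by (cases "length (leaves r)") auto
    note ab = a b
    show ?thesis using fA fB ab by (simp add: card_cartesian_product power_add)
  qed
  finally show ?case using eq fA fB by auto
qed



fun ins :: "nat \<Rightarrow> ltree \<Rightarrow> ltree list" where
  "ins x (Leaf j) = [Node (Leaf x) (Leaf j), Node (Leaf j) (Leaf x)]"
| "ins x (Node l r) = Node (Leaf x) (Node l r) # Node (Node l r) (Leaf x) #
     map (\<lambda>l'. Node l' r) (ins x l) @ map (\<lambda>r'. Node l r') (ins x r)"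

fun del :: "nat \<Rightarrow> ltree \<Rightarrow> ltree" where
  "del x (Leaf j) = Leaf j"
| "del x (Node l r) = (if l = Leaf x then r else if r = Leaf x then l
     else if x \<in> set (leaves l) then Node (del x l) r else Node l (del x r))"

lemma ins_set: "u \<in> set (ins x t) \<Longrightarrow> set (leaves u) = insert x (set (leaves t))"
  by (induction x t arbitrary: u rule: ins.induct) auto

lemma ins_len: "u \<in> set (ins x t) \<Longrightarrow> length (leaves u) = Suc (length (leaves t))"
  by (induction x t arbitrary: u rule: ins.induct) auto

lemma len_ge1: "length (leaves t) \<ge> 1"
  using leaves_ne[of t] by (cases "leaves t") auto

lemma ins_notleaf: "u \<in> set (ins x t) \<Longrightarrow> u \<noteq> Leaf y"
  using ins_len len_ge1 by (metis Suc_le_mono leaves.simps(1) length_Cons list.size(3) not_one_le_zero)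

lemma ins_distinct: "u \<in> set (ins x t) \<Longrightarrow> x \<notin> set (leaves t) \<Longrightarrow> distinct (leaves t) \<Longrightarrow> distinct (leaves u)"
proof (induction x t arbitrary: u rule: ins.induct)
  case (2 x l r) then show ?case using ins_set[of _ x l] ins_set[of _ x r] by auto
qed auto

lemma ins_del: "u \<in> set (ins x t) \<Longrightarrow> x \<notin> set (leaves t) \<Longrightarrow> del x u = t"
proof (induction x t arbitrary: u rule: ins.induct)
  case (1 x j) then show ?case by auto
next
  case (2 x l r)
  then show ?case using ins_set[of _ x l] ins_set[of _ x r] ins_notleaf[of _ x l] ins_notleaf[of _ x r]
    by auto
qed

lemma ins_length: "length (ins x t) = 4 * length (leaves t) - 2"
proof (induction x t rule: ins.induct)
  case (2 x l r) then show ?case using len_ge1[of l] len_ge1[of r] by simp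
qed simp

lemma ins_distinct_list: "x \<notin> set (leaves t) \<Longrightarrow> distinct (ins x t)"
proof (induction x t rule: ins.induct)
  case (1 x j) then show ?case by auto
next
  case (2 x l r)
  have a: "Node (Leaf x) (Node l r) \<notin> (\<lambda>l'. Node l' r) ` set (ins x l)" using ins_notleaf[of _ x l] by auto
  have b: "Node (Leaf x) (Node l r) \<notin> (\<lambda>r'. Node l r') ` set (ins x r)" using 2 by auto
  have c: "Node (Node l r) (Leaf x) \<notin> (\<lambda>l'. Node l' r) ` set (ins x l)" using 2 by auto
  have d: "Node (Node l r) (Leaf x) \<notin> (\<lambda>r'. Node l r') ` set (ins x r)" using ins_notleaf[of _ x r] by auto
  have e: "(\<lambda>l'. Node l' r) ` set (ins x l) \<inter> (\<lambda>r'. Node l r') ` set (ins x r) = {}"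
    using 2(3) ins_set[of _ x l] by auto
  show ?case using 2 a b c d e by (auto simp: distinct_map inj_on_def)
qed

lemma del_ins: "distinct (leaves u) \<Longrightarrow> x \<in> set (leaves u) \<Longrightarrow> u \<noteq> Leaf x \<Longrightarrow>
   u \<in> set (ins x (del x u))"
proof (induction u)
  case (Leaf y) then show ?case by auto
next
  case (Node l r)
  show ?case
  proof (cases "l = Leaf x")
    case True then show ?thesis by (cases r) auto
  next
    case F1: False
    show ?thesis
    proof (cases "r = Leaf x")
      case True then show ?thesis using F1 by (cases l) auto
    next
      case F2: False
      show ?thesis
      proof (cases "x \<in> set (leaves l)")
        case True
        then have "l \<in> set (ins x (del x l))" using Node F1 by auto
        then show ?thesis using True F1 F2 by (cases "del x l") auto
      next
        case False
        then have "x \<in> set (leaves r)" using Node.prems by auto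
        then have "r \<in> set (ins x (del x r))" using Node F2 by auto
        then show ?thesis using False F1 F2 by (cases "del x r") auto
      qed
    qed
  qed
qed

lemma sum_list_plus_const: "sum_list (map (\<lambda>y. f y + c) xs) = sum_list (map f xs) + length xs * (c::nat)"
  by (induction xs) auto

lemma ins_pl: "sum_list (map pl (ins x t)) = 4 * (length (leaves t) + 1) * pl t + 2 * (length (leaves t) + 1)"
proof (induction x t rule: ins.induct)
  case (1 x j) then show ?case by simp
next
  case (2 x l r)
  define a where "a = length (leaves l)"
  define b where "b = length (leaves r)"
  have ha: "a \<ge> 1" "b \<ge> 1" using len_ge1 a_def b_def by auto
  have s1: "sum_list (map pl (map (\<lambda>l'. Node l' r) (ins x l)))
     = sum_list (map pl (ins x l)) + length (ins x l) * (pl r + a + 1 + b)"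
  proof -
    have "sum_list (map pl (map (\<lambda>l'. Node l' r) (ins x l)))
       = sum_list (map (\<lambda>l'. pl l' + (pl r + a + 1 + b)) (ins x l))"
      by (intro arg_cong[where f=sum_list]) (auto simp: ins_len a_def b_def)
    also have "\<dots> = sum_list (map pl (ins x l)) + length (ins x l) * (pl r + a + 1 + b)"
      by (rule sum_list_plus_const)
    finally show ?thesis .
  qed
  have s2: "sum_list (map pl (map (\<lambda>r'. Node l r') (ins x r)))
     = sum_list (map pl (ins x r)) + length (ins x r) * (pl l + a + 1 + b)"
  proof -
    have "sum_list (map pl (map (\<lambda>r'. Node l r') (ins x r)))
       = sum_list (map (\<lambda>r'. pl r' + (pl l + a + 1 + b)) (ins x r))"
      by (intro arg_cong[where f=sum_list]) (auto simp: ins_len a_def b_def)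
    also have "\<dots> = sum_list (map pl (ins x r)) + length (ins x r) * (pl l + a + 1 + b)"
      by (rule sum_list_plus_const)
    finally show ?thesis .
  qed
  obtain a' where a': "a = Suc a'" using ha by (cases a) auto
  obtain b' where b': "b = Suc b'" using ha by (cases b) auto
  have la: "length (leaves l) = Suc a'" "length (leaves r) = Suc b'" using a' b' a_def b_def by auto
  show ?case
    using s1 s2 2 ins_length[of x l] ins_length[of x r]
    unfolding a_def[symmetric] b_def[symmetric]
    by (simp add: a' b' la algebra_simps)
qed



lemma lt_len: "t \<in> labelled_trees n \<Longrightarrow> length (leaves t) = n"
  unfolding labelled_trees_def by (metis (mono_tags) mem_Collect_eq card_atLeastAtMost distinct_card diff_Suc_1)

lemma L1: "labelled_trees 1 = {Leaf 1}"
proof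
  show "labelled_trees 1 \<subseteq> {Leaf 1}"
  proof
    fix t assume t: "t \<in> labelled_trees 1"
    then have "length (leaves t) = 1" by (rule lt_len)
    then obtain j where "leaves t = [j]" by (cases "leaves t") auto
    moreover have "t = Leaf j" if "leaves t = [j]"
      using that by (cases t) (auto simp: append_eq_Cons_conv leaves_ne)
    ultimately show "t \<in> {Leaf 1}" using t by (auto simp: labelled_trees_def)
  qed
qed (auto simp: labelled_trees_def)

lemma Lsuc: assumes "n \<ge> 1"
  shows "labelled_trees (Suc n) = (\<Union>t\<in>labelled_trees n. set (ins (Suc n) t))"
proof
  show "(\<Union>t\<in>labelled_trees n. set (ins (Suc n) t)) \<subseteq> labelled_trees (Suc n)"
  proof
    fix u assume "u \<in> (\<Union>t\<in>labelled_trees n. set (ins (Suc n) t))"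
    then obtain t where t: "t \<in> labelled_trees n" "u \<in> set (ins (Suc n) t)" by auto
    have "set (leaves u) = {1..Suc n}" using ins_set[OF t(2)] t(1)
      by (auto simp: labelled_trees_def)
    moreover have "distinct (leaves u)" using ins_distinct[OF t(2)] t(1)
      by (auto simp: labelled_trees_def)
    ultimately show "u \<in> labelled_trees (Suc n)" by (simp add: labelled_trees_def)
  qed
next
  show "labelled_trees (Suc n) \<subseteq> (\<Union>t\<in>labelled_trees n. set (ins (Suc n) t))"
  proof
    fix u assume u: "u \<in> labelled_trees (Suc n)"
    have lu: "length (leaves u) = Suc n" using lt_len[OF u] .
    have du: "distinct (leaves u)" and su: "set (leaves u) = {1..Suc n}"
      using u by (auto simp: labelled_trees_def)
    have "u \<noteq> Leaf (Suc n)" using lu assms by auto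
    then have ui: "u \<in> set (ins (Suc n) (del (Suc n) u))" using du su by (intro del_ins) auto
    define t where "t = del (Suc n) u"
    have st: "insert (Suc n) (set (leaves t)) = {1..Suc n}" using ins_set[OF ui] su t_def by simp
    have lt: "length (leaves t) = n" using ins_len[OF ui] lu t_def by simp
    have "Suc n \<notin> set (leaves t)"
    proof
      assume "Suc n \<in> set (leaves t)"
      then have "set (leaves t) = {1..Suc n}" using st by (simp add: insert_absorb)
      then have "card (set (leaves t)) = Suc n" by simp
      moreover have "card (set (leaves t)) \<le> n" using card_length[of "leaves t"] lt by simp
      ultimately show False by simp
    qed
    then have "set (leaves t) = {1..Suc n} - {Suc n}" using st by (metis Diff_insert_absorb)
    then have st2: "set (leaves t) = {1..n}" by (simp add: atLeastAtMostSuc_conv)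
    then have "distinct (leaves t)" using lt by (simp add: card_distinct)
    then have "t \<in> labelled_trees n" using st2 by (simp add: labelled_trees_def)
    then show "u \<in> (\<Union>t\<in>labelled_trees n. set (ins (Suc n) t))" using ui t_def by auto
  qed
qed

lemma ins_disj: assumes "t1 \<in> labelled_trees n" "t2 \<in> labelled_trees n" "t1 \<noteq> t2"
  shows "set (ins (Suc n) t1) \<inter> set (ins (Suc n) t2) = {}"
proof -
  have "Suc n \<notin> set (leaves t1)" "Suc n \<notin> set (leaves t2)" using assms by (auto simp: labelled_trees_def)
  then show ?thesis using ins_del[of _ "Suc n" t1] ins_del[of _ "Suc n" t2] assms(3) by auto
qed

lemma count_rec: assumes "n \<ge> 1" "finite (labelled_trees n)"
  shows "finite (labelled_trees (Suc n))"
    "card (labelled_trees (Suc n)) = (4 * n - 2) * card (labelled_trees n)"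
    "(\<Sum>u\<in>labelled_trees (Suc n). pl u) = 4 * (n + 1) * (\<Sum>t\<in>labelled_trees n. pl t) + 2 * (n + 1) * card (labelled_trees n)"
proof -
  note eq = Lsuc[OF assms(1)]
  show "finite (labelled_trees (Suc n))" unfolding eq using assms(2) by auto
  have "card (labelled_trees (Suc n)) = (\<Sum>t\<in>labelled_trees n. card (set (ins (Suc n) t)))"
    unfolding eq using assms(2) ins_disj by (intro card_UN_disjoint) auto
  also have "\<dots> = (\<Sum>t\<in>labelled_trees n. 4 * n - 2)"
  proof (rule sum.cong)
    fix t assume t: "t \<in> labelled_trees n"
    then have "Suc n \<notin> set (leaves t)" by (auto simp: labelled_trees_def)
    then show "card (set (ins (Suc n) t)) = 4 * n - 2"
      using ins_distinct_list distinct_card ins_length lt_len[OF t] by metis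
  qed simp
  finally show "card (labelled_trees (Suc n)) = (4 * n - 2) * card (labelled_trees n)" by simp
  have "(\<Sum>u\<in>labelled_trees (Suc n). pl u) = (\<Sum>t\<in>labelled_trees n. sum pl (set (ins (Suc n) t)))"
    unfolding eq using assms(2) ins_disj by (intro sum.UNION_disjoint) auto
  also have "\<dots> = (\<Sum>t\<in>labelled_trees n. 4 * (n + 1) * pl t + 2 * (n + 1))"
  proof (rule sum.cong)
    fix t assume t: "t \<in> labelled_trees n"
    then have "Suc n \<notin> set (leaves t)" by (auto simp: labelled_trees_def)
    then have "sum pl (set (ins (Suc n) t)) = sum_list (map pl (ins (Suc n) t))"
      using ins_distinct_list sum_list_distinct_conv_sum_set by metis
    then show "sum pl (set (ins (Suc n) t)) = 4 * (n + 1) * pl t + 2 * (n + 1)"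
      using ins_pl lt_len[OF t] by metis
  qed simp
  also have "\<dots> = 4 * (n + 1) * (\<Sum>t\<in>labelled_trees n. pl t) + 2 * (n + 1) * card (labelled_trees n)"
    by (simp only: sum.distrib sum_distrib_left[symmetric] sum_constant) (simp add: mult.commute)
  finally show "(\<Sum>u\<in>labelled_trees (Suc n). pl u) = 4 * (n + 1) * (\<Sum>t\<in>labelled_trees n. pl t) + 2 * (n + 1) * card (labelled_trees n)" .
qed

lemma closed: "finite (labelled_trees (Suc k)) \<and>
   real (card (labelled_trees (Suc k))) = fact (2 * k) / fact k \<and>
   real (\<Sum>t\<in>labelled_trees (Suc k). pl t) = real (Suc k) * (4 ^ k * fact k - fact (2 * k) / fact k)"
proof (induction k)
  case 0 then show ?case using L1 by simp
next
  case (Suc k)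
  have r: "finite (labelled_trees (Suc (Suc k)))"
    "card (labelled_trees (Suc (Suc k))) = (4 * Suc k - 2) * card (labelled_trees (Suc k))"
    "(\<Sum>u\<in>labelled_trees (Suc (Suc k)). pl u) = 4 * (Suc k + 1) * (\<Sum>t\<in>labelled_trees (Suc k). pl t) + 2 * (Suc k + 1) * card (labelled_trees (Suc k))"
    using count_rec[of "Suc k"] Suc.IH by auto
  have e: "real (4 * Suc k - 2) = 4 * real k + 2" by simp
  have f2: "(fact (2 * Suc k) :: real) = (2 * real k + 2) * (2 * real k + 1) * fact (2 * k)"
    by (simp add: algebra_simps)
  have f1: "(fact (Suc k) :: real) = (real k + 1) * fact k" by (simp add: algebra_simps)
  have fk: "(fact k :: real) > 0" "(fact k :: real) \<noteq> 0" "real k + 1 \<noteq> 0"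
     by simp_all
  have "(fact k :: real) + fact k * real k > 0" by (rule add_pos_nonneg) simp_all
  then have fk4: "(fact k :: real) + fact k * real k \<noteq> 0" by simp
  show ?case
  proof (intro conjI)
    show "finite (labelled_trees (Suc (Suc k)))" by (rule r(1))
    have c: "real (card (labelled_trees (Suc k))) = fact (2 * k) / fact k" using Suc.IH by blast
    have p: "real (\<Sum>t\<in>labelled_trees (Suc k). pl t) = real (Suc k) * (4 ^ k * fact k - fact (2 * k) / fact k)"
      using Suc.IH by blast
    show "real (card (labelled_trees (Suc (Suc k)))) = fact (2 * Suc k) / fact (Suc k)"
      unfolding r(2) of_nat_mult e c f2 f1 using fk fk4 by (simp add: field_simps)
    show "real (\<Sum>u\<in>labelled_trees (Suc (Suc k)). pl u) = real (Suc (Suc k)) * (4 ^ Suc k * fact (Suc k) - fact (2 * Suc k) / fact (Suc k))"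
      unfolding r(3) of_nat_mult of_nat_add p c f2 f1 using fk fk4 by (simp add: field_simps)
  qed
qed



definition w :: "nat \<Rightarrow> nat \<Rightarrow> real" where
  "w N m = fact (N + m) / (fact m * 2 ^ m)"

lemma w_step: "w N (Suc m) = w N m * (real N + real m + 1) / (2 * (real m + 1))"
  unfolding w_def by (simp add: field_simps)

lemma w_SucN: "w (Suc N) m = w N m * (real N + real m + 1)"
  unfolding w_def by (simp add: field_simps)

lemma W_sum: "(\<Sum>m<Suc N. w N m) = fact N * 2 ^ N"
proof (induction N)
  case 0 then show ?case by (simp add: w_def)
next
  case (Suc N)
  define D where "D m = - 2 * real m * w N m" for m
  have t: "w (Suc N) m - 2 * (real N + 1) * w N m = D (Suc m) - D m" for m
    unfolding D_def w_SucN w_step by (simp add: field_simps)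
  have "(\<Sum>m<Suc N. w (Suc N) m - 2 * (real N + 1) * w N m) = D (Suc N) - D 0"
    unfolding t by (rule sum_lessThan_telescope)
  then have a: "(\<Sum>m<Suc N. w (Suc N) m) = 2 * (real N + 1) * (fact N * 2 ^ N) + D (Suc N)"
    using Suc.IH by (simp add: sum_subtractf sum_distrib_left[symmetric] D_def)
  have b: "w (Suc N) (Suc N) + D (Suc N) = 0"
    unfolding D_def w_SucN by (simp add: algebra_simps)
  have "(\<Sum>m<Suc (Suc N). w (Suc N) m) = (\<Sum>m<Suc N. w (Suc N) m) + w (Suc N) (Suc N)"
    by simp
  also have "\<dots> = 2 * (real N + 1) * (fact N * 2 ^ N)" using a b by simp
  finally show ?case by (simp add: algebra_simps)
qed

lemma A_sum: "(\<Sum>m<Suc N. ((real N + 1 - real m)^2 - 2 * (real N + 1)) * w N m)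
   = - 2 * (real N + 1) * w N (Suc N)"
proof -
  define H where "H m = 2 * real m * (real N - real m) * w N m" for m
  have t: "((real N + 1 - real m)^2 - 2 * (real N + 1)) * w N m = H (Suc m) - H m" for m
    unfolding H_def w_step by (simp add: field_simps power2_eq_square)
  have "(\<Sum>m<Suc N. ((real N + 1 - real m)^2 - 2 * (real N + 1)) * w N m) = H (Suc N) - H 0"
    unfolding t by (rule sum_lessThan_telescope)
  then show ?thesis by (simp add: H_def)
qed

lemma rhs_closed:
  "(\<Sum>k = 1..Suc N. fact (2 * (N + 2) - k - 3) * real (k ^ 2) / (fact ((N + 2) - k - 1) * 2 ^ ((N + 2) - k - 1)))
   = 2 ^ Suc N * fact (Suc N) - fact (2 * N + 2) / (fact (Suc N) * 2 ^ Suc N)"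
proof -
  have "(\<Sum>m<Suc N. (real N + 1 - real m)^2 * w N m) =
     (\<Sum>k = 1..Suc N. fact (2 * (N + 2) - k - 3) * real (k ^ 2) / (fact ((N + 2) - k - 1) * 2 ^ ((N + 2) - k - 1)))"
  proof (rule sum.reindex_bij_witness[where i="\<lambda>k. Suc N - k" and j="\<lambda>m. Suc N - m"])
    fix m assume m: "m \<in> {..<Suc N}"
    then have e1: "2 * (N + 2) - (Suc N - m) - 3 = N + m" "(N + 2) - (Suc N - m) - 1 = m"
      and e2: "real (Suc N - m) = real N + 1 - real m" by auto
    show "fact (2 * (N + 2) - (Suc N - m) - 3) * real ((Suc N - m) ^ 2) /
        (fact ((N + 2) - (Suc N - m) - 1) * 2 ^ ((N + 2) - (Suc N - m) - 1)) = (real N + 1 - real m)^2 * w N m"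
      unfolding e1 of_nat_power e2 w_def by simp
  qed auto
  then have "(\<Sum>k = 1..Suc N. fact (2 * (N + 2) - k - 3) * real (k ^ 2) / (fact ((N + 2) - k - 1) * 2 ^ ((N + 2) - k - 1)))
     = (\<Sum>m<Suc N. (real N + 1 - real m)^2 * w N m)" by simp
  also have "\<dots> = (\<Sum>m<Suc N. ((real N + 1 - real m)^2 - 2 * (real N + 1)) * w N m) + 2 * (real N + 1) * (\<Sum>m<Suc N. w N m)"
    unfolding sum_distrib_left sum.distrib[symmetric] by (rule sum.cong) (auto simp: algebra_simps)
  also have "\<dots> = - 2 * (real N + 1) * w N (Suc N) + 2 * (real N + 1) * (fact N * 2 ^ N)"
    unfolding A_sum W_sum ..
  also have "\<dots> = 2 ^ Suc N * fact (Suc N) - fact (2 * N + 2) / (fact (Suc N) * 2 ^ Suc N)"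
  proof -
    have q: "2 * N + 2 = Suc (N + Suc N)" by simp
    have "fact (2 * N + 2) = (2 * real N + 2) * (fact (N + Suc N) :: real)"
      unfolding q fact_Suc by simp
    then have "2 * (real N + 1) * w N (Suc N) = fact (2 * N + 2) / (fact (Suc N) * 2 ^ Suc N)"
      unfolding w_def by (simp add: algebra_simps)
    moreover have "2 * (real N + 1) * (fact N * 2 ^ N) = 2 ^ Suc N * fact (Suc N)"
      by (simp add: algebra_simps)
    ultimately show ?thesis by linarith
  qed
  finally show ?thesis .
qed



lemma class_sum: assumes fin: "finite (labelled_trees n)"
  shows "2 ^ (n - 1) * (\<Sum>C\<in>BT n. sackin_class n C) = (\<Sum>t\<in>labelled_trees n. pl t)"
proof -
  let ?L = "labelled_trees n"
  define cl where "cl x = {u. iso x u}" for x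
  have BT: "BT n = cl ` ?L"
    unfolding BT_def quotient_def cl_def by auto
  have sub: "cl x \<subseteq> ?L" if "x \<in> ?L" for x
    using that iso_set iso_distinct unfolding cl_def labelled_trees_def by fastforce
  have cc: "finite (cl x) \<and> card (cl x) = 2 ^ (n - 1)" if "x \<in> ?L" for x
    using card_iso_class[of x] that lt_len[OF that] unfolding cl_def labelled_trees_def by auto
  have sc: "sackin_class n (cl x) = pl x" if "x \<in> ?L" for x
  proof -
    have "x \<in> cl x" using iso_refl cl_def by auto
    then have "(SOME t. t \<in> cl x) \<in> cl x" by (rule someI)
    then have "iso x (SOME t. t \<in> cl x)" "(SOME t. t \<in> cl x) \<in> ?L" using sub[OF that] cl_def by auto
    then show ?thesis unfolding sackin_class_def using sackin_pl iso_pl by metis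
  qed
  have disj: "cl x = cl y \<or> cl x \<inter> cl y = {}" for x y
  proof (cases "cl x \<inter> cl y = {}")
    case False
    then obtain z where "iso x z" "iso y z" unfolding cl_def by auto
    then have "iso x y" "iso y x" using iso_sym iso_trans by blast+
    then have "cl x = cl y" unfolding cl_def using iso_trans by blast
    then show ?thesis by simp
  qed simp
  have U: "\<Union> (BT n) = ?L"
  proof
    show "\<Union> (BT n) \<subseteq> ?L" using sub BT by auto
    show "?L \<subseteq> \<Union> (BT n)" unfolding BT cl_def using iso_refl by blast
  qed
  have "(\<Sum>t\<in>?L. pl t) = (\<Sum>C\<in>BT n. \<Sum>t\<in>C. pl t)"
    unfolding U[symmetric]
  proof (rule sum.Union_disjoint[simplified])
    show "\<forall>A\<in>BT n. finite A" unfolding BT using cc by auto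
    show "\<forall>A\<in>BT n. \<forall>B\<in>BT n. A \<noteq> B \<longrightarrow> A \<inter> B = {}" unfolding BT using disj by blast
  qed
  also have "\<dots> = (\<Sum>C\<in>BT n. 2 ^ (n - 1) * sackin_class n C)"
  proof (rule sum.cong)
    fix C assume "C \<in> BT n"
    then obtain x where x: "x \<in> ?L" "C = cl x" unfolding BT by auto
    have "(\<Sum>t\<in>C. pl t) = (\<Sum>t\<in>C. pl x)"
    proof (rule sum.cong)
      fix t assume "t \<in> C" then show "pl t = pl x" using x iso_pl unfolding cl_def by (metis mem_Collect_eq)
    qed simp
    also have "\<dots> = 2 ^ (n - 1) * sackin_class n C" using cc[OF x(1)] sc[OF x(1)] x(2) by simp
    finally show "(\<Sum>t\<in>C. pl t) = 2 ^ (n - 1) * sackin_class n C" .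
  qed simp
  finally show ?thesis by (simp add: sum_distrib_left)
qed

lemma alg_aux: fixes T F X c :: real assumes "T > 0" "F > 0"
  shows "(c * (T * T * F - X / F)) / T = c * (T * F - X / (F * T))"
  using assms by (simp add: field_simps)

theorem mainTheorem17:
  fixes n :: nat
  assumes "n \<ge> 3"
  shows "real (\<Sum>C \<in> BT n. sackin_class n C) =
    real n * (\<Sum>k = 1..n - 1. fact (2 * n - k - 3) * real (k ^ 2)
                               / (fact (n - k - 1) * 2 ^ (n - k - 1)))"
proof -
  define N where "N = n - 2"
  have N: "n = N + 2" using assms N_def by simp
  have cl: "finite (labelled_trees (Suc (Suc N)))"
    "real (\<Sum>t\<in>labelled_trees (Suc (Suc N)). pl t) = real (Suc (Suc N)) * (4 ^ Suc N * fact (Suc N) - fact (2 * Suc N) / fact (Suc N))"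
    using closed[of "Suc N"] by auto
  have n1: "n - 1 = Suc N" using N by simp
  have cs: "2 ^ Suc N * real (\<Sum>C\<in>BT n. sackin_class n C) = real (\<Sum>t\<in>labelled_trees n. pl t)"
    using class_sum[of n] cl(1) N n1 by (metis of_nat_mult of_nat_numeral of_nat_power add_2_eq_Suc')
  have r: "(\<Sum>k = 1..n - 1. fact (2 * n - k - 3) * real (k ^ 2) / (fact (n - k - 1) * 2 ^ (n - k - 1)))
    = 2 ^ Suc N * fact (Suc N) - fact (2 * N + 2) / (fact (Suc N) * 2 ^ Suc N)"
    unfolding n1 using rhs_closed[of N] N by simp
  have e4: "(4::real) ^ Suc N = 2 ^ Suc N * 2 ^ Suc N"
    by (metis power_mult_distrib numeral_times_numeral semiring_norm(12) semiring_norm(13) num_double)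
  have "real (\<Sum>C\<in>BT n. sackin_class n C) = real (\<Sum>t\<in>labelled_trees n. pl t) / 2 ^ Suc N"
    using cs by (simp add: field_simps)
  also have "\<dots> = real n * (2 ^ Suc N * fact (Suc N) - fact (2 * N + 2) / (fact (Suc N) * 2 ^ Suc N))"
  proof -
    have "real (\<Sum>t\<in>labelled_trees n. pl t) = real n * (2 ^ Suc N * 2 ^ Suc N * fact (Suc N) - fact (2 * N + 2) / fact (Suc N))"
      using cl(2) N e4 by (simp add: mult_2_right)
    then show ?thesis using alg_aux[of "2 ^ Suc N" "fact (Suc N)" "real n" "fact (2 * N + 2)"] by simp
  qed
  finally show ?thesis using r by simp
qed

end
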